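(* Let $\mathcal{G}'=(G';T_1',T_2';\theta')\in\mathcal{G}_2^{sym}$ with $\mathcal{G}'\neq\mathcal{K}_1$. Then there exists $\mathcal{G}=(G;T_1,T_2;\theta)\in\mathcal{G}_2^{sym}$ such that $\mathcal{G}'$ is obtained from $\mathcal{G}$ by either a symmetric $2$-tree $0$-extension or a symmetric $2$-tree $1$-extension.
   Context: A multi-graph is finite and loop-free, possibly with parallel edges. A $2$-tree decomposition is $(G;T_1,T_2)$ with $G$ a multi-graph and $T_1,T_2$ spanning trees of $G$ whose edge sets partition $E(G)$. Let $\mathbb{Z}_2=\langle s\rangle$. A $\mathbb{Z}_2$-symmetric multi-graph is a pair $(G,\theta)$ with $\theta:\mathbb{Z}_2\to\mathrm{Aut}(G)$ a non-trivial homomorphism; write $s_\theta=\theta(s)$ and for an edge $e=v_1v_2$, $s_\theta(e)=s_\theta(v_1)s_\theta(v_2)$. A vertex $v$ (edge $e$) is fixed if $s_\theta(v)=v$ ($s_\theta(e)=e$). A symmetric $2$-tree decomposition is $(G;T_1,T_2;\theta)$ where $(G;T_1,T_2)$ is a $2$-tree decomposition, $(G,\theta)$ is $\mathbb{Z}_2$-symmetric and $s_\theta(T_i)=T_i$ for $i=1,2$. $\mathcal{G}_2^{sym}$ denotes the set of symmetric $2$-tree decompositions with no fixed edges, together with $\mathcal{K}_1=(K_1;T_1,T_2;\theta)$ where $K_1$ is a single vertex, the $T_i$ are edgeless and $\theta$ is trivial. For $d\in\{1,2\}$: $(G',\theta')$ is obtained from $(G,\theta)$ by a symmetric $d$-dimensional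 $0$-extension if $V(G')=V(G)\cup\{v,s_{\theta'}(v)\}$ with $v,s_{\theta'}(v)\notin V(G)$ distinct, $s_{\theta'}|_{V(G)}=s_\theta$, and $E(G')=E(G)+\{vv_i,s_{\theta'}(vv_i):i=1,\dots,d\}$ for some not necessarily distinct $v_1,\dots,v_d\in V(G)$; it is obtained by a symmetric $d$-dimensional $1$-extension if the first two conditions hold and there are $v_1,\dots,v_{d+1}\in V(G)$ with $e=v_1v_2\in E(G)$ (otherwise not necessarily distinct) such that $E(G')=E(G)-\{e,s_\theta(e)\}+\{vv_i,s_{\theta'}(vv_i):i=1,\dots,d+1\}$. A symmetric $2$-tree decomposition $(G';T_1',T_2';\theta')$ is obtained from $(G;T_1,T_2;\theta)$ by a symmetric $2$-tree $j$-extension ($j\in\{0,1\}$) if $(G',\theta')$ is obtained from $(G,\theta)$ by a symmetric $2$-dimensional $j$-extension and, for $i=1,2$, $(T_i',\theta')$ is obtained from $(T_i,\theta)$ (with the restricted automorphisms) by a symmetric $1$-dimensional $k_i$-extension with the same new vertices, where $k_i\in\{0,1\}$ and $k_1+k_2=j$. *)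

theory Defs
  imports Main "HOL-Library.Multiset"
begin

text \<open>A multigraph is a finite vertex set V together with a finite multiset E of
  edges; each edge is a 2-element set of vertices (loop-free, parallel edges allowed
  as repeated elements of the multiset).\<close>

definition multigraph :: "'v set \<Rightarrow> 'v set multiset \<Rightarrow> bool" where
  "multigraph V E \<longleftrightarrow> finite V \<and> (\<forall>e\<in>#E. e \<subseteq> V \<and> card e = 2)"

definition connected_mg :: "'v set \<Rightarrow> 'v set multiset \<Rightarrow> bool" where
  "connected_mg V E \<longleftrightarrow>
     (\<forall>x\<in>V. \<forall>y\<in>V. (x, y) \<in> {(a, b). {a, b} \<in># E}\<^sup>*)"

text \<open>A cycle: distinct vertices v_0,...,v_{k-1}, k >= 2, with the edges
  v_i v_{i+1 mod k} (counted with multiplicity) all in E. For k = 2 this is a pair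
  of parallel edges.\<close>

definition has_cycle :: "'v set multiset \<Rightarrow> bool" where
  "has_cycle E \<longleftrightarrow> (\<exists>vs. length vs \<ge> 2 \<and> distinct vs \<and>
     mset (map (\<lambda>i. {vs ! i, vs ! ((i + 1) mod length vs)}) [0..<length vs]) \<subseteq># E)"

definition is_tree :: "'v set \<Rightarrow> 'v set multiset \<Rightarrow> bool" where
  "is_tree V T \<longleftrightarrow> multigraph V T \<and> V \<noteq> {} \<and> connected_mg V T \<and> \<not> has_cycle T"

definition spanning_tree :: "'v set \<Rightarrow> 'v set multiset \<Rightarrow> 'v set multiset \<Rightarrow> bool" where
  "spanning_tree V E T \<longleftrightarrow> T \<subseteq># E \<and> is_tree V T"

definition two_tree_decomp ::
  "'v set \<Rightarrow> 'v set multiset \<Rightarrow> 'v set multiset \<Rightarrow> 'v set multiset \<Rightarrow> bool" where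
  "two_tree_decomp V E T1 T2 \<longleftrightarrow> multigraph V E \<and>
     spanning_tree V E T1 \<and> spanning_tree V E T2 \<and> T1 + T2 = E"

abbreviation edge_img :: "('v \<Rightarrow> 'v) \<Rightarrow> 'v set \<Rightarrow> 'v set" where
  "edge_img s e \<equiv> s ` e"

definition automorphism :: "'v set \<Rightarrow> 'v set multiset \<Rightarrow> ('v \<Rightarrow> 'v) \<Rightarrow> bool" where
  "automorphism V E s \<longleftrightarrow> bij_betw s V V \<and> image_mset (edge_img s) E = E"

text \<open>A Z_2-symmetric multigraph (G,theta): theta is determined by s_theta = theta(s),
  which must be an automorphism with s_theta^2 = id (homomorphism from Z_2) and
  s_theta \<noteq> id (non-trivial). Only the values of s on V are relevant.\<close>

definition z2_symmetric :: "'v set \<Rightarrow> 'v set multiset \<Rightarrow> ('v \<Rightarrow> 'v) \<Rightarrow> bool" where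
  "z2_symmetric V E s \<longleftrightarrow> multigraph V E \<and> automorphism V E s \<and>
     (\<forall>x\<in>V. s (s x) = x) \<and> (\<exists>x\<in>V. s x \<noteq> x)"

text \<open>A (symmetric) 2-tree decomposition is a tuple (V(G), E(G), E(T1), E(T2), s_theta).\<close>

type_synonym 'v s2td = "'v set \<times> 'v set multiset \<times> 'v set multiset \<times> 'v set multiset \<times> ('v \<Rightarrow> 'v)"

fun sym_2td :: "'v s2td \<Rightarrow> bool" where
  "sym_2td (V, E, T1, T2, s) \<longleftrightarrow> two_tree_decomp V E T1 T2 \<and> z2_symmetric V E s \<and>
     image_mset (edge_img s) T1 = T1 \<and> image_mset (edge_img s) T2 = T2"

definition no_fixed_edges :: "'v set multiset \<Rightarrow> ('v \<Rightarrow> 'v) \<Rightarrow> bool" where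
  "no_fixed_edges E s \<longleftrightarrow> (\<forall>e\<in>#E. edge_img s e \<noteq> e)"

fun is_K1 :: "'v s2td \<Rightarrow> bool" where
  "is_K1 (V, E, T1, T2, s) \<longleftrightarrow> (\<exists>x. V = {x}) \<and> E = {#} \<and> T1 = {#} \<and> T2 = {#} \<and>
     (\<forall>x\<in>V. s x = x)"

fun in_G2sym :: "'v s2td \<Rightarrow> bool" where
  "in_G2sym (V, E, T1, T2, s) \<longleftrightarrow>
     (sym_2td (V, E, T1, T2, s) \<and> no_fixed_edges E s) \<or> is_K1 (V, E, T1, T2, s)"

text \<open>Symmetric d-dimensional 0-extension from (V,E,s) to (V',E',s') with new vertex v
  (the other new vertex being s' v); vs = [v_1,...,v_d].\<close>

definition sym_ext0 :: "nat \<Rightarrow> 'v \<Rightarrow> 'v set \<Rightarrow> 'v set multiset \<Rightarrow> ('v \<Rightarrow> 'v)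
    \<Rightarrow> 'v set \<Rightarrow> 'v set multiset \<Rightarrow> ('v \<Rightarrow> 'v) \<Rightarrow> bool" where
  "sym_ext0 d v V E s V' E' s' \<longleftrightarrow>
     v \<notin> V \<and> s' v \<notin> V \<and> v \<noteq> s' v \<and> V' = V \<union> {v, s' v} \<and> (\<forall>x\<in>V. s' x = s x) \<and>
     (\<exists>vs. length vs = d \<and> set vs \<subseteq> V \<and>
        E' = E + sum_list (map (\<lambda>u. {#{v, u}, edge_img s' {v, u}#}) vs))"

text \<open>Symmetric d-dimensional 1-extension; vs = [v_1,...,v_{d+1}], e = v_1 v_2 in E.\<close>

definition sym_ext1 :: "nat \<Rightarrow> 'v \<Rightarrow> 'v set \<Rightarrow> 'v set multiset \<Rightarrow> ('v \<Rightarrow> 'v)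
    \<Rightarrow> 'v set \<Rightarrow> 'v set multiset \<Rightarrow> ('v \<Rightarrow> 'v) \<Rightarrow> bool" where
  "sym_ext1 d v V E s V' E' s' \<longleftrightarrow>
     v \<notin> V \<and> s' v \<notin> V \<and> v \<noteq> s' v \<and> V' = V \<union> {v, s' v} \<and> (\<forall>x\<in>V. s' x = s x) \<and>
     (\<exists>vs. length vs = d + 1 \<and> set vs \<subseteq> V \<and> {vs ! 0, vs ! 1} \<in># E \<and>
        E' = E - {#{vs ! 0, vs ! 1}, edge_img s {vs ! 0, vs ! 1}#}
               + sum_list (map (\<lambda>u. {#{v, u}, edge_img s' {v, u}#}) vs))"

definition sym_ext :: "nat \<Rightarrow> nat \<Rightarrow> 'v \<Rightarrow> 'v set \<Rightarrow> 'v set multiset \<Rightarrow> ('v \<Rightarrow> 'v)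
    \<Rightarrow> 'v set \<Rightarrow> 'v set multiset \<Rightarrow> ('v \<Rightarrow> 'v) \<Rightarrow> bool" where
  "sym_ext j d v V E s V' E' s' \<longleftrightarrow>
     (j = 0 \<and> sym_ext0 d v V E s V' E' s') \<or> (j = 1 \<and> sym_ext1 d v V E s V' E' s')"

fun sym_2tree_ext :: "nat \<Rightarrow> 'v s2td \<Rightarrow> 'v s2td \<Rightarrow> bool" where
  "sym_2tree_ext j (V, E, T1, T2, s) (V', E', T1', T2', s') \<longleftrightarrow>
     (\<exists>v k1 k2. k1 \<in> {0, 1} \<and> k2 \<in> {0, 1} \<and> k1 + k2 = j \<and>
        sym_ext j 2 v V E s V' E' s' \<and>
        sym_ext k1 1 v V T1 s V' T1' s' \<and>
        sym_ext k2 1 v V T2 s V' T2' s')"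

end

theory Submission imports Defs begin

definition deg :: "'v set multiset \<Rightarrow> 'v \<Rightarrow> nat" where
  "deg T x = size (filter_mset (\<lambda>e. x \<in> e) T)"

lemma handshake:
  assumes "finite V" "\<forall>e\<in>#T. e \<subseteq> V \<and> card e = 2"
  shows "(\<Sum>x\<in>V. deg T x) = 2 * size T"
  using assms(2)
proof (induction T)
  case empty
  then show ?case by (simp add: deg_def)
next
  case (add e T)
  have d: "deg (add_mset e T) x = deg T x + (if x \<in> e then 1 else 0)" for x
    by (simp add: deg_def)
  have "(\<Sum>x\<in>V. (if x \<in> e then 1 else 0::nat)) = card (V \<inter> e)"
    using assms(1) by (simp add: sum.If_cases)
  also have "V \<inter> e = e" using add.prems by auto
  finally have "(\<Sum>x\<in>V. (if x \<in> e then 1 else 0::nat)) = 2" using add.prems by simp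
  then show ?case using add by (simp add: d sum.distrib)
qed

lemma two_in_mset_size:
  assumes "a \<in># M" "b \<in># M" "a \<noteq> b"
  shows "2 \<le> size M"
proof -
  have "{#a, b#} \<subseteq># M" using assms
    by (simp add: insert_subset_eq_iff in_diff_count)
  then show ?thesis using size_mset_mono by fastforce
qed

lemma has_cycle_mono: "has_cycle A \<Longrightarrow> A \<subseteq># B \<Longrightarrow> has_cycle B"
  unfolding has_cycle_def using subset_mset.order_trans by blast

lemma distinct_mset_sub:
  assumes "distinct xs" "set xs \<subseteq> set_mset M"
  shows "mset xs \<subseteq># M"
proof (rule mset_subset_eqI)
  fix x show "count (mset xs) x \<le> count M x"
    using assms by (cases "x \<in> set xs") (auto simp: distinct_count_atmost_1)
qed

definition ce :: "'v list \<Rightarrow> 'v set list" where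
  "ce vs = map (\<lambda>i. {vs ! i, vs ! ((i + 1) mod length vs)}) [0..<length vs]"

lemma has_cycle_ce: "has_cycle E \<longleftrightarrow> (\<exists>vs. length vs \<ge> 2 \<and> distinct vs \<and> mset (ce vs) \<subseteq># E)"
  unfolding has_cycle_def ce_def by simp

lemma ce_distinct:
  assumes "distinct vs" "length vs \<ge> 3"
  shows "distinct (ce vs)"
  unfolding ce_def distinct_conv_nth
proof (intro allI impI)
  fix i j assume ij: "i < length (map (\<lambda>i. {vs ! i, vs ! ((i + 1) mod length vs)}) [0..<length vs])"
    "j < length (map (\<lambda>i. {vs ! i, vs ! ((i + 1) mod length vs)}) [0..<length vs])" "i \<noteq> j"
  let ?m = "length vs"
  have i: "i < ?m" and j: "j < ?m" using ij by auto
  show "map (\<lambda>i. {vs ! i, vs ! ((i + 1) mod length vs)}) [0..<length vs] ! i \<noteq>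
        map (\<lambda>i. {vs ! i, vs ! ((i + 1) mod length vs)}) [0..<length vs] ! j"
  proof
    assume "map (\<lambda>i. {vs ! i, vs ! ((i + 1) mod length vs)}) [0..<length vs] ! i =
        map (\<lambda>i. {vs ! i, vs ! ((i + 1) mod length vs)}) [0..<length vs] ! j"
    then have eq: "{vs ! i, vs ! ((i + 1) mod ?m)} = {vs ! j, vs ! ((j + 1) mod ?m)}"
      using i j by simp
    have mi: "(i + 1) mod ?m < ?m" and mj: "(j + 1) mod ?m < ?m" using i by (auto intro!: mod_less_divisor)
    have "vs ! i \<noteq> vs ! j" using assms(1) i j ij(3) by (simp add: nth_eq_iff_index_eq)
    then have "vs ! i = vs ! ((j + 1) mod ?m) \<and> vs ! ((i + 1) mod ?m) = vs ! j"
      using eq by (auto simp: doubleton_eq_iff)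
    then have "i = (j + 1) mod ?m" "(i + 1) mod ?m = j"
      using assms(1) i j mi mj by (auto simp: nth_eq_iff_index_eq)
    then show False using i j ij(3) assms(2)
    proof (cases "j + 1 < ?m")
      case True
      then have "i = j + 1" using \<open>i = (j + 1) mod ?m\<close> by simp
      then show False using \<open>(i + 1) mod ?m = j\<close> i assms(2)
      proof (cases "j + 2 < ?m")
        case False
        then have "j + 2 = ?m" using True by simp
        then have "(i + 1) mod ?m = 0" using \<open>i = j + 1\<close> by simp
        then show False using \<open>(i + 1) mod ?m = j\<close> \<open>j + 2 = ?m\<close> assms(2) by simp
      qed simp
    next
      case False
      then have "j + 1 = ?m" using j by simp
      then have "i = 0" using \<open>i = (j + 1) mod ?m\<close> by simp
      then show False using \<open>(i + 1) mod ?m = j\<close> \<open>j + 1 = ?m\<close> assms(2) by simp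
    qed
  qed
qed

lemma two_cycle:
  assumes "x \<noteq> y" "{#{x,y},{x,y}#} \<subseteq># T"
  shows "has_cycle T"
  unfolding has_cycle_ce
  apply (rule exI[of _ "[x,y]"])
  using assms by (simp add: ce_def insert_commute)

lemma path_cycle:
  assumes "distinct cs" "length cs \<ge> 3"
    "\<forall>i. Suc i < length cs \<longrightarrow> {cs!i, cs!Suc i} \<in># T" "{cs ! (length cs - 1), cs ! 0} \<in># T"
  shows "has_cycle T"
  unfolding has_cycle_ce
proof (intro exI conjI)
  show "2 \<le> length cs" "distinct cs" using assms by auto
  show "mset (ce cs) \<subseteq># T"
  proof (rule distinct_mset_sub)
    show "distinct (ce cs)" using ce_distinct assms by blast
    show "set (ce cs) \<subseteq> set_mset T"
    proof
      fix e assume "e \<in> set (ce cs)"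
      then obtain i where i: "i < length cs" "e = {cs ! i, cs ! ((i + 1) mod length cs)}"
        by (auto simp: ce_def)
      show "e \<in># T"
      proof (cases "Suc i < length cs")
        case True then show ?thesis using i assms(3) by simp
      next
        case False
        then have "Suc i = length cs" using i by auto
        then have "i = length cs - 1" "(i + 1) mod length cs = 0" by auto
        then show ?thesis using i assms(4) by simp
      qed
    qed
  qed
qed

lemma ce_rotate: "ce (rotate k cs) = rotate k (ce cs)"
proof (rule nth_equalityI)
  show "length (ce (rotate k cs)) = length (rotate k (ce cs))" by (simp add: ce_def)
  fix n assume "n < length (ce (rotate k cs))"
  then have n: "n < length cs" by (simp add: ce_def)
  then have m: "0 < length cs" by auto
  have "ce (rotate k cs) ! n = {cs ! ((k + n) mod length cs), cs ! ((k + (n + 1) mod length cs) mod length cs)}"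
    using n m by (simp add: ce_def nth_rotate)
  also have "(k + (n + 1) mod length cs) mod length cs = ((k + n) mod length cs + 1) mod length cs"
    by (simp add: mod_simps add.assoc)
  also have "{cs ! ((k + n) mod length cs), cs ! (((k + n) mod length cs + 1) mod length cs)} = rotate k (ce cs) ! n"
    using n m by (simp add: ce_def nth_rotate)
  finally show "ce (rotate k cs) ! n = rotate k (ce cs) ! n" .
qed

lemma mset_rotate1': "mset (rotate1 xs) = mset xs"
  by (cases xs) auto

lemma mset_rotate': "mset (rotate n xs) = mset xs"
  by (induction n) (auto simp: mset_rotate1')

lemma mset_ce_rotate: "mset (ce (rotate k cs)) = mset (ce cs)"
  by (simp add: ce_rotate mset_rotate')

lemma sub_add_single_notin:
  assumes "A \<subseteq># M + {#e#}" "e \<notin># A"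
  shows "A \<subseteq># M"
proof (rule mset_subset_eqI)
  fix d
  have "count A d \<le> count (M + {#e#}) d" using assms(1) by (simp add: subseteq_mset_def)
  then show "count A d \<le> count M d" using assms(2) by (cases "d = e") (auto simp: not_in_iff)
qed

lemma ce_snoc:
  assumes "ds \<noteq> []"
  shows "mset (ce ds) = mset (map (\<lambda>j. {ds ! j, ds ! (j + 1)}) [0..<length ds - 1]) + {#{ds ! (length ds - 1), ds ! 0}#}"
    and "mset (ce (ds @ [z])) = mset (map (\<lambda>j. {ds ! j, ds ! (j + 1)}) [0..<length ds - 1]) + {#{ds ! (length ds - 1), z}, {z, ds ! 0}#}"
proof -
  let ?m = "length ds"
  have m: "?m = Suc (?m - 1)" using assms by (cases ds) auto
  have u1: "[0..<?m] = [0..<?m - 1] @ [?m - 1]" using m by (metis upt_Suc_append zero_le)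
  have u2: "[0..<Suc ?m] = [0..<?m - 1] @ [?m - 1, ?m]" using u1 by simp
  have c1: "map (\<lambda>i. {ds ! i, ds ! ((i + 1) mod ?m)}) [0..<?m - 1] = map (\<lambda>j. {ds ! j, ds ! (j + 1)}) [0..<?m - 1]"
    by (rule map_cong) auto
  have c2: "map (\<lambda>i. {(ds @ [z]) ! i, (ds @ [z]) ! ((i + 1) mod Suc ?m)}) [0..<?m - 1] = map (\<lambda>j. {ds ! j, ds ! (j + 1)}) [0..<?m - 1]"
    by (rule map_cong) (auto simp: nth_append)
  show "mset (ce ds) = mset (map (\<lambda>j. {ds ! j, ds ! (j + 1)}) [0..<?m - 1]) + {#{ds ! (?m - 1), ds ! 0}#}"
    unfolding ce_def u1 map_append c1 using m by (simp del: upt_Suc)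
  have "(?m - 1 + 1) mod Suc ?m = ?m" using m by simp
  then show "mset (ce (ds @ [z])) = mset (map (\<lambda>j. {ds ! j, ds ! (j + 1)}) [0..<?m - 1]) + {#{ds ! (?m - 1), z}, {z, ds ! 0}#}"
    unfolding ce_def length_append_singleton u2 map_append c2 using m assms by (simp add: nth_append del: upt_Suc)
qed

lemma cyc_insert:
  assumes "length cs \<ge> 2" "distinct cs" "mset (ce cs) \<subseteq># M + {#{x,y}#}" "z \<notin> set cs"
  shows "\<exists>cs'. length cs' \<ge> 2 \<and> distinct cs' \<and> set cs' \<subseteq> insert z (set cs) \<and>
    mset (ce cs') \<subseteq># M + {#{z,x},{z,y}#}"
proof (cases "{x,y} \<in># mset (ce cs)")
  case False
  have "mset (ce cs) \<subseteq># M" using sub_add_single_notin[OF assms(3)] False by simp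
  then have "mset (ce cs) \<subseteq># M + {#{z,x},{z,y}#}" by (rule subset_mset.add_increasing2[rotated]) simp
  then show ?thesis using assms(1,2) by (intro exI[of _ cs]) auto
next
  case True
  let ?m = "length cs"
  from True obtain i where i: "i < ?m" "{cs ! i, cs ! ((i + 1) mod ?m)} = {x,y}"
    by (auto simp: ce_def)
  define ds where "ds = rotate (Suc i) cs"
  have lds: "length ds = ?m" by (simp add: ds_def)
  have dsne: "ds \<noteq> []" using assms(1) lds by auto
  have d1: "ds ! (?m - 1) = cs ! i"
  proof -
    have "ds ! (?m - 1) = cs ! ((Suc i + (?m - 1)) mod ?m)" unfolding ds_def by (rule nth_rotate) (use assms(1) in simp)
    also have "Suc i + (?m - 1) = i + ?m" using assms(1) by simp
    also have "(i + ?m) mod ?m = i" using i by simp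
    finally show ?thesis .
  qed
  have "cs \<noteq> []" using assms(1) by auto
  then have d0: "ds ! 0 = cs ! ((i + 1) mod ?m)" unfolding ds_def using nth_rotate[of 0 cs "Suc i"] by simp
  let ?A = "mset (map (\<lambda>j. {ds ! j, ds ! (j + 1)}) [0..<length ds - 1])"
  have "mset (ce ds) = mset (ce cs)" unfolding ds_def by (rule mset_ce_rotate)
  then have "?A + {#{x,y}#} \<subseteq># M + {#{x,y}#}" using ce_snoc(1)[OF dsne] assms(3) d1 d0 i lds by simp
  then have A: "?A \<subseteq># M" by simp
  have "{#{ds ! (length ds - 1), z}, {z, ds ! 0}#} = {#{z,x},{z,y}#}"
  proof -
    have "{ds ! (length ds - 1), ds ! 0} = {x,y}" using i(2) d1 d0 lds by simp
    then consider "ds ! (length ds - 1) = x" "ds ! 0 = y" | "ds ! (length ds - 1) = y" "ds ! 0 = x"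
      by (auto simp: doubleton_eq_iff)
    then show ?thesis
    proof cases
      case 1 then show ?thesis by (simp add: insert_commute)
    next
      case 2 then show ?thesis by (simp add: insert_commute add_mset_commute)
    qed
  qed
  then have "mset (ce (ds @ [z])) \<subseteq># M + {#{z,x},{z,y}#}"
    using ce_snoc(2)[OF dsne, of z] A by simp
  moreover have "distinct (ds @ [z])" using assms(2,4) by (simp add: ds_def)
  moreover have "set (ds @ [z]) \<subseteq> insert z (set cs)" by (simp add: ds_def)
  moreover have "length (ds @ [z]) \<ge> 2" using lds assms(1) by simp
  ultimately show ?thesis by blast
qed

lemma conn_reduce:
  assumes conn: "connected_mg V T" and edges: "\<forall>e\<in>#T. e \<subseteq> V" and WV: "W \<subseteq> V"
    and H1: "\<And>p q. p \<in> W \<Longrightarrow> q \<in> W \<Longrightarrow> {p,q} \<in># T \<Longrightarrow> (p,q) \<in> {(a, b). {a, b} \<in># Tr}\<^sup>*"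
    and H2: "\<And>p q z. p \<in> W \<Longrightarrow> q \<in> W \<Longrightarrow> z \<in> V - W \<Longrightarrow> {p,z} \<in># T \<Longrightarrow> {z,q} \<in># T
       \<Longrightarrow> (p,q) \<in> {(a, b). {a, b} \<in># Tr}\<^sup>*"
    and H3: "\<And>z1 z2. z1 \<in> V - W \<Longrightarrow> z2 \<in> V - W \<Longrightarrow> {z1,z2} \<notin># T"
  shows "connected_mg W Tr"
  unfolding connected_mg_def
proof (intro ballI)
  fix x y assume x: "x \<in> W" and y: "y \<in> W"
  have xy: "(x,y) \<in> {(a, b). {a, b} \<in># T}\<^sup>*" using conn x y WV unfolding connected_mg_def by blast
  have "(y \<in> W \<longrightarrow> (x,y) \<in> {(a, b). {a, b} \<in># Tr}\<^sup>*) \<and>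
        (y \<notin> W \<longrightarrow> (\<exists>p\<in>W. {p,y} \<in># T \<and> (x,p) \<in> {(a, b). {a, b} \<in># Tr}\<^sup>*))"
    using xy
  proof (induction rule: rtrancl_induct)
    case base
    then show ?case using x by simp
  next
    case (step y z)
    then have yz: "{y,z} \<in># T" by simp
    then have yzV: "y \<in> V" "z \<in> V" using edges by auto
    show ?case
    proof (cases "y \<in> W")
      case True
      then have xy: "(x,y) \<in> {(a, b). {a, b} \<in># Tr}\<^sup>*" using step.IH by blast
      show ?thesis
      proof (cases "z \<in> W")
        case True
        then show ?thesis using H1[OF \<open>y \<in> W\<close> True yz] xy by simp
      next
        case False
        then show ?thesis using \<open>y \<in> W\<close> yz xy by blast
      qed
    next
      case False
      then obtain p where p: "p \<in> W" "{p,y} \<in># T" "(x,p) \<in> {(a, b). {a, b} \<in># Tr}\<^sup>*"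
        using step.IH by blast
      show ?thesis
      proof (cases "z \<in> W")
        case True
        have "(p,z) \<in> {(a, b). {a, b} \<in># Tr}\<^sup>*" using H2[OF p(1) True _ p(2) yz] False yzV by blast
        then show ?thesis using p(3) True by simp
      next
        case False
        then show ?thesis using H3[of y z] \<open>y \<notin> W\<close> yzV yz by blast
      qed
    qed
  qed
  then show "(x,y) \<in> {(a, b). {a, b} \<in># Tr}\<^sup>*" using y by blast
qed

lemma card2_elem: "card e = 2 \<Longrightarrow> l \<in> e \<Longrightarrow> \<exists>z. e = {l,z} \<and> z \<noteq> l"
  by (auto simp: card_2_iff doubleton_eq_iff)

lemma edge_exists:
  assumes "connected_mg V T" "x \<in> V" "y \<in> V" "x \<noteq> y"
  shows "\<exists>z. {x,z} \<in># T"
proof -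
  have "(x,y) \<in> {(a, b). {a, b} \<in># T}\<^sup>*" using assms unfolding connected_mg_def by blast
  then show ?thesis using assms(4) by (cases rule: converse_rtranclE) auto
qed

definition walk :: "'v set multiset \<Rightarrow> 'v list \<Rightarrow> bool" where
  "walk T ps \<longleftrightarrow> (\<forall>i. Suc i < length ps \<longrightarrow> {ps!i, ps!Suc i} \<in># T)"

lemma leaf_exists:
  assumes tree: "is_tree V T" and c2: "2 \<le> card V"
  shows "\<exists>x\<in>V. deg T x \<le> 1"
proof -
  have mg: "finite V" "\<forall>e\<in>#T. e \<subseteq> V \<and> card e = 2" and conn: "connected_mg V T" and nc: "\<not> has_cycle T"
    using tree unfolding is_tree_def multigraph_def by auto
  define P where "P ps \<longleftrightarrow> distinct ps \<and> set ps \<subseteq> V \<and> walk T ps" for ps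
  obtain x y where xy: "x \<in> V" "y \<in> V" "x \<noteq> y"
  proof -
    have "V \<noteq> {}" using c2 by auto
    then obtain x where x: "x \<in> V" by blast
    have "card (V - {x}) \<ge> 1" using c2 x mg(1) by simp
    then have "V - {x} \<noteq> {}" by (metis card.empty not_one_le_zero)
    then obtain y where "y \<in> V - {x}" by blast
    then show ?thesis using that x by blast
  qed
  obtain z where z: "{x,z} \<in># T" using edge_exists[OF conn xy] by blast
  then have zx: "z \<noteq> x" "z \<in> V" using mg by (auto simp: card_2_iff)
  have P2: "P [x,z]" using zx xy z by (simp add: P_def walk_def less_Suc_eq)
  have bound: "\<forall>ps. P ps \<longrightarrow> length ps < card V + 1"
    using mg(1) by (auto simp: P_def distinct_card[symmetric] intro: card_mono le_imp_less_Suc)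
  obtain ps where ps: "P ps" and maxp: "\<forall>qs. P qs \<longrightarrow> length qs \<le> length ps"
    using ex_has_greatest_nat[of P "[x,z]" length "card V + 1"] P2 bound by blast
  have k2: "length ps \<ge> 2" using maxp P2 by fastforce
  define k where "k = length ps"
  define l where "l = ps ! (k - 1)"
  define p where "p = ps ! (k - 2)"
  have psd: "distinct ps" "set ps \<subseteq> V" "walk T ps" using ps by (auto simp: P_def)
  have pl: "{p,l} \<in># T"
  proof -
    have "Suc (k - 2) < length ps" "Suc (k - 2) = k - 1" using k2 unfolding k_def by auto
    then show ?thesis using psd(3) unfolding walk_def p_def l_def by metis
  qed
  have pneql: "p \<noteq> l" using psd(1) k2 unfolding p_def l_def k_def by (simp add: nth_eq_iff_index_eq)
  have lV: "l \<in> V" using psd(2) k2 unfolding l_def k_def by auto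
  have "deg T l \<le> 1"
  proof (rule ccontr)
    assume "\<not> deg T l \<le> 1"
    then have d2: "2 \<le> size (filter_mset (\<lambda>e. l \<in> e) T)" by (simp add: deg_def)
    let ?F = "filter_mset (\<lambda>e. l \<in> e) T"
    have plF: "{p,l} \<in># ?F" using pl by simp
    have "size (?F - {#{p,l}#}) \<ge> 1" using d2 plF by (simp add: size_Diff_submset)
    then have "?F - {#{p,l}#} \<noteq> {#}" by (metis not_one_le_zero size_empty)
    then obtain e where e: "e \<in># ?F - {#{p,l}#}" by (meson multiset_nonemptyE)
    then have eT: "e \<in># T" "l \<in> e" by (auto dest: in_diffD)
    show False
    proof (cases "e = {p,l}")
      case True
      then have "{#{p,l},{p,l}#} \<subseteq># ?F" using e plF
        by (simp only: insert_subset_eq_iff) simp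
      then have "{#{p,l},{p,l}#} \<subseteq># T" using multiset_filter_subset subset_mset.order_trans by blast
      then show False using two_cycle[OF pneql] nc by blast
    next
      case False
      have ce2: "card e = 2" using mg(2) eT(1) by blast
      obtain z where ez: "e = {l,z}" "z \<noteq> l" using card2_elem[OF ce2 eT(2)] by blast
      have zp: "z \<noteq> p" using False ez by (auto simp: insert_commute)
      have zV: "z \<in> V" using mg eT ez by auto
      show False
      proof (cases "z \<in> set ps")
        case False
        have "P (ps @ [z])"
          unfolding P_def walk_def
        proof (intro conjI allI impI)
          show "distinct (ps @ [z])" "set (ps @ [z]) \<subseteq> V" using psd False zV by auto
          fix i assume i: "Suc i < length (ps @ [z])"
          show "{(ps @ [z]) ! i, (ps @ [z]) ! Suc i} \<in># T"
          proof (cases "Suc i < length ps")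
            case True then show ?thesis using psd(3) by (simp add: walk_def nth_append)
          next
            case False
            then have "i = k - 1" "Suc i = k" using i k2 unfolding k_def by auto
            then show ?thesis using eT ez k2 unfolding l_def k_def by (simp add: nth_append)
          qed
        qed
        then show False using maxp by fastforce
      next
        case True
        then obtain j where j: "j < k" "ps ! j = z" unfolding k_def by (auto simp: in_set_conv_nth)
        have "j \<noteq> k - 1" "j \<noteq> k - 2" using j zp ez(2) unfolding p_def l_def by auto
        then have j3: "j + 3 \<le> k" using j by auto
        define cs where "cs = drop j ps"
        have lcs: "length cs = k - j" by (simp add: cs_def k_def)
        have "has_cycle T"
        proof (rule path_cycle)
          show "distinct cs" using psd by (simp add: cs_def)
          show "3 \<le> length cs" using lcs j3 by simp
          show "\<forall>i. Suc i < length cs \<longrightarrow> {cs ! i, cs ! Suc i} \<in># T"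
            using psd(3) j3 unfolding walk_def cs_def k_def by (auto simp: add.commute)
          have "cs ! (length cs - 1) = l" using lcs j3 unfolding cs_def l_def k_def
            by (simp add: add.commute)
          moreover have "cs ! 0 = z" using j j3 unfolding cs_def k_def by simp
          ultimately show "{cs ! (length cs - 1), cs ! 0} \<in># T" using eT ez by simp
        qed
        then show False using nc by blast
      qed
    qed
  qed
  then show ?thesis using lV by blast
qed

lemma size_split: "size T = size (filter_mset (\<lambda>e. x \<notin> e) T) + deg T x"
  unfolding deg_def by (metis add.commute size_union multiset_partition)

lemma tree_size: "is_tree V T \<Longrightarrow> size T + 1 \<le> card V"
proof (induction "card V" arbitrary: V T rule: less_induct)
  case less
  have mg: "finite V" "\<forall>e\<in>#T. e \<subseteq> V \<and> card e = 2" and conn: "connected_mg V T"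
    and nc: "\<not> has_cycle T" and ne: "V \<noteq> {}"
    using less.prems unfolding is_tree_def multigraph_def by auto
  show ?case
  proof (cases "2 \<le> card V")
    case False
    have "T = {#}"
    proof (rule ccontr)
      assume "T \<noteq> {#}"
      then obtain e where "e \<in># T" by (meson multiset_nonemptyE)
      then have "e \<subseteq> V" "card e = 2" using mg by auto
      then have "2 \<le> card V" using card_mono mg(1) by metis
      then show False using False by simp
    qed
    then show ?thesis using ne mg(1) by (simp add: Suc_leI card_gt_0_iff)
  next
    case True
    obtain x where x: "x \<in> V" "deg T x \<le> 1" using leaf_exists[OF less.prems True] by blast
    define T0 where "T0 = filter_mset (\<lambda>e. x \<notin> e) T"
    define V0 where "V0 = V - {x}"
    have cV0: "card V0 < card V" using x mg(1) True by (simp add: V0_def)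
    have "is_tree V0 T0"
      unfolding is_tree_def
    proof (intro conjI)
      show "multigraph V0 T0" using mg unfolding multigraph_def T0_def V0_def by auto
      show "V0 \<noteq> {}"
      proof
        assume "V0 = {}"
        then have "V = {x}" using x unfolding V0_def by auto
        then show False using True by simp
      qed
      show "\<not> has_cycle T0" using nc has_cycle_mono[of T0 T] unfolding T0_def by auto
      show "connected_mg V0 T0"
      proof (rule conn_reduce[OF conn])
        show "\<forall>e\<in>#T. e \<subseteq> V" using mg by auto
        show "V0 \<subseteq> V" by (auto simp: V0_def)
        fix p q assume "p \<in> V0" "q \<in> V0" "{p,q} \<in># T"
        then have "{p,q} \<in># T0" by (auto simp: T0_def V0_def)
        then show "(p, q) \<in> {(a, b). {a, b} \<in># T0}\<^sup>*" by auto
      next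
        fix p q z assume "p \<in> V0" "q \<in> V0" "z \<in> V - V0" "{p,z} \<in># T" "{z,q} \<in># T"
        then have z: "z = x" by (auto simp: V0_def)
        have "p = q"
        proof (rule ccontr)
          assume "p \<noteq> q"
          then have "{p,z} \<noteq> {z,q}" using \<open>p \<in> V0\<close> z by (auto simp: V0_def doubleton_eq_iff)
          moreover have "{p,z} \<in># filter_mset (\<lambda>e. x \<in> e) T" "{z,q} \<in># filter_mset (\<lambda>e. x \<in> e) T"
            using \<open>{p,z} \<in># T\<close> \<open>{z,q} \<in># T\<close> z by auto
          ultimately have "2 \<le> deg T x" unfolding deg_def by (meson two_in_mset_size)
          then show False using x by simp
        qed
        then show "(p, q) \<in> {(a, b). {a, b} \<in># T0}\<^sup>*" by simp
      next
        fix z1 z2 assume "z1 \<in> V - V0" "z2 \<in> V - V0"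
        then have "z1 = x" "z2 = x" by (auto simp: V0_def)
        then show "{z1, z2} \<notin># T" using mg by force
      qed
    qed
    then have "size T0 + 1 \<le> card V0" using less.hyps cV0 by blast
    moreover have "card V0 = card V - 1" using x mg(1) by (simp add: V0_def)
    moreover have "size T = size T0 + deg T x" unfolding T0_def by (rule size_split)
    ultimately show ?thesis using x True by linarith
  qed
qed

lemma filter_single_nbrs:
  assumes "filter_mset (\<lambda>e. z \<in> e) T = {#e#}" "{p,z} \<in># T" "{z,q} \<in># T"
  shows "p = q"
proof -
  have "{p,z} \<in># filter_mset (\<lambda>e. z \<in> e) T" "{z,q} \<in># filter_mset (\<lambda>e. z \<in> e) T"
    using assms(2,3) by auto
  then have "{p,z} = e" "{z,q} = e" using assms(1) by auto
  then have "{p,z} = {z,q}" by simp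
  then show ?thesis by (auto simp: doubleton_eq_iff)
qed

lemma cycle_vertices:
  assumes "mset (ce cs) \<subseteq># T" "\<forall>e\<in>#T. e \<subseteq> W"
  shows "set cs \<subseteq> W"
proof
  fix x assume "x \<in> set cs"
  then obtain i where i: "i < length cs" "cs ! i = x" by (auto simp: in_set_conv_nth)
  have "{cs ! i, cs ! ((i + 1) mod length cs)} \<in> set (ce cs)" using i(1) by (auto simp: ce_def)
  then have "{cs ! i, cs ! ((i + 1) mod length cs)} \<in># mset (ce cs)" by simp
  then have "{cs ! i, cs ! ((i + 1) mod length cs)} \<in># T" by (rule mset_subset_eqD[OF assms(1)])
  then show "x \<in> W" using assms(2) i(2) by blast
qed

locale symset =
  fixes V :: "'v set" and s :: "'v \<Rightarrow> 'v" and v :: 'v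
  assumes fin: "finite V" and bij: "bij_betw s V V" and inv: "\<forall>x\<in>V. s (s x) = x"
    and vV: "v \<in> V" and sv: "s v \<noteq> v"
begin

abbreviation "w \<equiv> s v"
abbreviation "W \<equiv> V - {v, s v}"

lemma wV: "w \<in> V" using bij vV by (meson bij_betwE)
lemma sw: "s w = v" using inv vV by blast
lemma sV: "x \<in> V \<Longrightarrow> s x \<in> V" using bij by (meson bij_betwE)
lemma sinj: "x \<in> V \<Longrightarrow> y \<in> V \<Longrightarrow> s x = s y \<Longrightarrow> x = y"
proof -
  assume a: "x \<in> V" "y \<in> V" "s x = s y"
  have "x = s (s x)" using inv a(1) by simp
  also have "\<dots> = s (s y)" using a(3) by simp
  also have "\<dots> = y" using inv a(2) by simp
  finally show ?thesis .
qed
lemma sW: "x \<in> W \<Longrightarrow> s x \<in> W"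
  using sV inv sv sw by (metis DiffD1 DiffD2 DiffI insertCI insertE singletonD vV)
lemma bijW: "bij_betw s W W"
proof -
  have "inj_on s W" by (rule inj_onI) (rule sinj, auto)
  moreover have "s ` W = W"
  proof
    show "s ` W \<subseteq> W" by (rule image_subsetI) (rule sW)
    show "W \<subseteq> s ` W"
    proof
      fix x assume x: "x \<in> W" then have "s x \<in> W" "s (s x) = x" using sW[OF x] inv by auto
      then show "x \<in> s ` W" by (metis image_eqI)
    qed
  qed
  ultimately show ?thesis by (simp add: bij_betw_def)
qed
lemma invW: "\<forall>x\<in>W. s (s x) = x" using inv by blast

lemma img_img: "e \<subseteq> V \<Longrightarrow> s ` (s ` e) = e"
  using inv by (force simp: image_image)

definition R :: "'v set multiset \<Rightarrow> 'v set multiset" where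
  "R T = filter_mset (\<lambda>e. v \<notin> e \<and> w \<notin> e) T"

end

locale symtree = symset V s v for V :: "'v set" and s v +
  fixes T :: "'v set multiset"
  assumes tree: "is_tree V T" and invT: "image_mset ((`) s) T = T" and nf: "\<forall>e\<in>#T. s ` e \<noteq> e"
begin

lemma mgT: "\<forall>e\<in>#T. e \<subseteq> V \<and> card e = 2" using tree by (simp add: is_tree_def multigraph_def)
lemma connT: "connected_mg V T" using tree by (simp add: is_tree_def)
lemma ncT: "\<not> has_cycle T" using tree by (simp add: is_tree_def)

lemma img_in: "e \<in># T \<Longrightarrow> s ` e \<in># T"
  using invT by (metis image_eqI multiset.set_map)

lemma no_vw: "e \<in># T \<Longrightarrow> v \<in> e \<Longrightarrow> w \<in> e \<Longrightarrow> False"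
proof -
  assume e: "e \<in># T" "v \<in> e" "w \<in> e"
  have "card e = 2" using mgT e(1) by blast
  then obtain z where z: "e = {v,z}" "z \<noteq> v" using card2_elem[OF _ e(2)] by blast
  then have "e = {v,w}" using e sv by auto
  then have "s ` e = e" using sw by auto
  then show False using nf e by blast
qed

lemma wiff: "e \<in># T \<Longrightarrow> w \<in> s ` e \<longleftrightarrow> v \<in> e"
proof
  assume e: "e \<in># T" and "w \<in> s ` e"
  then obtain y where "y \<in> e" "s v = s y" by auto
  moreover have "y \<in> V" using e \<open>y \<in> e\<close> mgT by blast
  ultimately show "v \<in> e" using sinj vV by metis
qed auto

lemma viff: "e \<in># T \<Longrightarrow> v \<in> s ` e \<longleftrightarrow> w \<in> e"
proof
  assume e: "e \<in># T" and "v \<in> s ` e"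
  then obtain y where "y \<in> e" "v = s y" by auto
  moreover have "y \<in> V" using e \<open>y \<in> e\<close> mgT by blast
  ultimately show "w \<in> e" using inv by metis
next
  assume "e \<in># T" "w \<in> e" then show "v \<in> s ` e" using sw by force
qed

lemma filter_w: "filter_mset (\<lambda>e. w \<in> e) T = image_mset ((`) s) (filter_mset (\<lambda>e. v \<in> e) T)"
proof -
  have "filter_mset (\<lambda>e. w \<in> e) T = filter_mset (\<lambda>e. w \<in> e) (image_mset ((`) s) T)" using invT by simp
  also have "\<dots> = image_mset ((`) s) (filter_mset (\<lambda>e. w \<in> s ` e) T)" by (rule filter_mset_image_mset)
  also have "filter_mset (\<lambda>e. w \<in> s ` e) T = filter_mset (\<lambda>e. v \<in> e) T"
    using wiff by (metis (no_types, lifting) filter_mset_cong)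
  finally show ?thesis .
qed

lemma decomp: "T = R T + filter_mset (\<lambda>e. v \<in> e) T + filter_mset (\<lambda>e. w \<in> e) T"
proof -
  have "T = filter_mset (\<lambda>e. v \<in> e) T + filter_mset (\<lambda>e. \<not> v \<in> e) T" by (rule multiset_partition)
  moreover have "filter_mset (\<lambda>e. \<not> v \<in> e) T = filter_mset (\<lambda>e. w \<in> e) (filter_mset (\<lambda>e. \<not> v \<in> e) T)
     + filter_mset (\<lambda>e. \<not> w \<in> e) (filter_mset (\<lambda>e. \<not> v \<in> e) T)" by (rule multiset_partition)
  moreover have "filter_mset (\<lambda>e. w \<in> e) (filter_mset (\<lambda>e. \<not> v \<in> e) T) = filter_mset (\<lambda>e. w \<in> e) T"
    unfolding filter_filter_mset by (rule filter_mset_cong) (auto dest: no_vw)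
  moreover have "filter_mset (\<lambda>e. \<not> w \<in> e) (filter_mset (\<lambda>e. \<not> v \<in> e) T) = R T"
    unfolding filter_filter_mset R_def by (rule filter_mset_cong) auto
  ultimately show ?thesis by (metis add.commute union_assoc)
qed

lemma R_sub: "R T \<subseteq># T" by (simp add: R_def)
lemma R_W: "\<forall>e\<in>#R T. e \<subseteq> W \<and> card e = 2" using mgT by (auto simp: R_def)
lemma R_inv: "image_mset ((`) s) (R T) = R T"
proof -
  have "image_mset ((`) s) (R T) = image_mset ((`) s) (filter_mset (\<lambda>e. v \<notin> s ` e \<and> w \<notin> s ` e) T)"
    unfolding R_def using wiff viff by (metis (no_types, lifting) filter_mset_cong)
  also have "\<dots> = filter_mset (\<lambda>e. v \<notin> e \<and> w \<notin> e) (image_mset ((`) s) T)"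
    by (rule image_mset_filter_mset_swap)
  finally show ?thesis using invT by (simp add: R_def)
qed

lemma H1: "p \<in> W \<Longrightarrow> q \<in> W \<Longrightarrow> {p,q} \<in># T \<Longrightarrow> {p,q} \<in># R T"
  by (auto simp: R_def)

lemma H3: "z1 \<in> V - W \<Longrightarrow> z2 \<in> V - W \<Longrightarrow> {z1,z2} \<notin># T"
proof
  assume "z1 \<in> V - W" "z2 \<in> V - W" "{z1,z2} \<in># T"
  then have z: "z1 \<in> {v, w}" "z2 \<in> {v, w}" by auto
  show False
  proof (cases "z1 = z2")
    case True
    then show False using mgT \<open>{z1,z2} \<in># T\<close> by force
  next
    case False
    then show False using no_vw[OF \<open>{z1,z2} \<in># T\<close>] z by auto
  qed
qed

lemma vedge: "e \<in># T \<Longrightarrow> v \<in> e \<Longrightarrow> \<exists>u. e = {v,u} \<and> u \<in> W"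
proof -
  assume e: "e \<in># T" "v \<in> e"
  have "card e = 2" using mgT e(1) by blast
  then obtain u where u: "e = {v,u}" "u \<noteq> v" using card2_elem[OF _ e(2)] by blast
  have "u \<in> V" using mgT e u by auto
  moreover have "u \<noteq> w" using no_vw e u by blast
  ultimately show ?thesis using u by blast
qed

lemma s_edge: "x \<in> V \<Longrightarrow> s ` {v, x} = {w, s x}" by simp

lemma tree_reduce:
  assumes mg: "\<forall>e\<in>#Tr. e \<subseteq> W \<and> card e = 2" and ne: "W \<noteq> {}" and nc: "\<not> has_cycle Tr"
    and Rsub: "R T \<subseteq># Tr"
    and H2: "\<And>p q z. p \<in> W \<Longrightarrow> q \<in> W \<Longrightarrow> z \<in> V - W \<Longrightarrow> {p,z} \<in># T \<Longrightarrow> {z,q} \<in># T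
       \<Longrightarrow> (p,q) \<in> {(a, b). {a, b} \<in># Tr}\<^sup>*"
  shows "is_tree W Tr"
  unfolding is_tree_def
proof (intro conjI)
  show "multigraph W Tr" using mg fin by (simp add: multigraph_def)
  show "W \<noteq> {}" "\<not> has_cycle Tr" using ne nc by auto
  show "connected_mg W Tr"
  proof (rule conn_reduce[OF connT])
    show "\<forall>e\<in>#T. e \<subseteq> V" using mgT by blast
    show "W \<subseteq> V" by blast
    fix p q assume "p \<in> W" "q \<in> W" "{p,q} \<in># T"
    then have "{p,q} \<in># Tr" using H1 Rsub by (meson mset_subset_eqD)
    then show "(p, q) \<in> {(a, b). {a, b} \<in># Tr}\<^sup>*" by auto
  next
    fix p q z assume "p \<in> W" "q \<in> W" "z \<in> V - W" "{p,z} \<in># T" "{z,q} \<in># T"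
    then show "(p, q) \<in> {(a, b). {a, b} \<in># Tr}\<^sup>*" by (rule H2)
  next
    fix z1 z2 assume "z1 \<in> V - W" "z2 \<in> V - W"
    then show "{z1, z2} \<notin># T" by (rule H3)
  qed
qed

lemma piece1:
  assumes "deg T v = 1"
  shows "\<exists>u. u \<in> W \<and> T = R T + {#{v,u}, s ` {v,u}#} \<and> is_tree W (R T)"
proof -
  obtain e where F: "filter_mset (\<lambda>e. v \<in> e) T = {#e#}"
    using assms size_1_singleton_mset unfolding deg_def by blast
  then have "e \<in># filter_mset (\<lambda>e. v \<in> e) T" by simp
  then have "e \<in># T" "v \<in> e" by auto
  then obtain u where u: "e = {v,u}" "u \<in> W" using vedge by blast
  have Fw: "filter_mset (\<lambda>e. w \<in> e) T = {#s ` e#}" using F filter_w by simp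
  have "T = R T + {#e#} + {#s ` e#}" using decomp unfolding F Fw .
  also have "R T + {#e#} + {#s ` e#} = R T + {#{v,u}, s ` {v,u}#}" using u(1) by (simp add: add_mset_commute)
  finally have Tdec: "T = R T + {#{v,u}, s ` {v,u}#}" .
  have "is_tree W (R T)"
  proof (rule tree_reduce)
    show "\<forall>e\<in>#R T. e \<subseteq> W \<and> card e = 2" by (rule R_W)
    show "W \<noteq> {}" using u by blast
    show "\<not> has_cycle (R T)" using ncT has_cycle_mono R_sub by blast
    show "R T \<subseteq># R T" by simp
    fix p q z assume pq: "p \<in> W" "q \<in> W" "z \<in> V - W" "{p,z} \<in># T" "{z,q} \<in># T"
    have "p = q"
    proof (cases "z = v")
      case True
      then show ?thesis using filter_single_nbrs[OF F] pq by blast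
    next
      case False
      then have "z = w" using pq by blast
      then show ?thesis using filter_single_nbrs[OF Fw] pq by blast
    qed
    then show "(p, q) \<in> {(a, b). {a, b} \<in># R T}\<^sup>*" by simp
  qed
  then show ?thesis using u Tdec by blast
qed

lemma adj_pair: "p \<in> {x,y} \<Longrightarrow> q \<in> {x,y} \<Longrightarrow> {x,y} \<in># Tr \<Longrightarrow> (p,q) \<in> {(a, b). {a, b} \<in># Tr}\<^sup>*"
proof -
  assume a: "p \<in> {x,y}" "q \<in> {x,y}" "{x,y} \<in># Tr"
  show ?thesis
  proof (cases "p = q")
    case True then show ?thesis by simp
  next
    case False
    then have "{p,q} = {x,y}" using a(1,2) by auto
    then have "(p,q) \<in> {(a, b). {a, b} \<in># Tr}" using a(3) by simp
    then show ?thesis by (rule r_into_rtrancl)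
  qed
qed

lemma piece2:
  assumes "deg T v = 2"
  shows "\<exists>a b. a \<in> W \<and> b \<in> W \<and> {a,b} \<in># R T + {#{a,b}, s ` {a,b}#} \<and>
     T = R T + {#{v,a}, s ` {v,a}#} + {#{v,b}, s ` {v,b}#} \<and>
     is_tree W (R T + {#{a,b}, s ` {a,b}#}) \<and>
     image_mset ((`) s) (R T + {#{a,b}, s ` {a,b}#}) = R T + {#{a,b}, s ` {a,b}#} \<and>
     (\<forall>e\<in># R T + {#{a,b}, s ` {a,b}#}. s ` e \<noteq> e)"
proof -
  let ?F = "filter_mset (\<lambda>e. v \<in> e) T"
  have sF: "size ?F = 2" using assms by (simp add: deg_def)
  then obtain e1 where e1: "e1 \<in># ?F" by (metis multiset_nonemptyE size_empty zero_neq_numeral)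
  have "size (?F - {#e1#}) = 1" using sF e1 by (simp add: size_Diff_submset)
  then obtain e2 where e2: "?F - {#e1#} = {#e2#}" using size_1_singleton_mset by blast
  have F: "?F = {#e1, e2#}" using e1 e2 by (metis insert_DiffM)
  have "e1 \<in># T" "v \<in> e1" using e1 by auto
  then obtain a where a: "e1 = {v,a}" "a \<in> W" using vedge by blast
  have "e2 \<in># ?F" using F by simp
  then have "e2 \<in># T" "v \<in> e2" by auto
  then obtain b where b: "e2 = {v,b}" "b \<in> W" using vedge by blast
  have aV: "a \<in> V" and bV: "b \<in> V" using a b by auto
  have va: "v \<noteq> a" "v \<noteq> b" "w \<noteq> a" "w \<noteq> b" using a b by auto
  have FT: "{#{v,a},{v,b}#} \<subseteq># T" using F a b by (metis multiset_filter_subset)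
  have ab: "a \<noteq> b"
  proof
    assume "a = b"
    then have "{#{v,a},{v,a}#} \<subseteq># T" using FT by simp
    then show False using two_cycle[OF va(1)] ncT by blast
  qed
  have Fw: "filter_mset (\<lambda>e. w \<in> e) T = {#s ` {v,a}, s ` {v,b}#}" using F filter_w a b by simp
  have sva: "s ` {v,a} = {w, s a}" and svb: "s ` {v,b} = {w, s b}" by auto
  have "T = R T + {#e1, e2#} + {#s ` {v,a}, s ` {v,b}#}" using decomp unfolding F Fw .
  also have "\<dots> = R T + {#{v,a}, s ` {v,a}#} + {#{v,b}, s ` {v,b}#}" using a(1) b(1)
    by (simp add: add_mset_commute)
  finally have Tdec: "T = R T + {#{v,a}, s ` {v,a}#} + {#{v,b}, s ` {v,b}#}" .
  have wa: "{w, s a} \<in># T" "{w, s b} \<in># T" using Tdec sva svb by (metis add_mset_add_single union_iff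
        insert_noteq_member union_single_eq_member)+
  have saW: "s a \<in> W" "s b \<in> W" using sW a b by auto
  have sab: "s ` {a,b} = {s a, s b}" by simp
  have sanb: "s a \<noteq> s b" using sinj aV bV ab by blast
  have nfab: "s ` {a,b} \<noteq> {a,b}"
  proof
    assume "s ` {a,b} = {a,b}"
    then have "{s a, s b} = {a,b}" by simp
    then have "{w,a} \<in># T \<and> {w,b} \<in># T" using wa by (auto simp: doubleton_eq_iff)
    then have wa2: "{a,w} \<in># T" "{w,b} \<in># T" by (auto simp: insert_commute)
    have vaT0: "{v,a} \<in># T" "{v,b} \<in># T" using mset_subset_eqD[OF FT] by auto
    then have vaT: "{v,a} \<in># T" "{b,v} \<in># T" by (auto simp: insert_commute)
    have "has_cycle T"
    proof (rule path_cycle[of "[v,a,w,b]"])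
      show "distinct [v,a,w,b]" using va ab sv by auto
      show "3 \<le> length [v,a,w,b]" by simp
      show "\<forall>i. Suc i < length [v,a,w,b] \<longrightarrow> {[v,a,w,b] ! i, [v,a,w,b] ! Suc i} \<in># T"
      proof (intro allI impI)
        fix i assume "Suc i < length [v,a,w,b]"
        then have "i = 0 \<or> i = 1 \<or> i = 2" by auto
        then show "{[v,a,w,b] ! i, [v,a,w,b] ! Suc i} \<in># T" using vaT wa2 by auto
      qed
      show "{[v,a,w,b] ! (length [v,a,w,b] - 1), [v,a,w,b] ! 0} \<in># T" using vaT by simp
    qed
    then show False using ncT by blast
  qed
  define Tr where "Tr = R T + {#{a,b}, s ` {a,b}#}"
  have mgTr: "\<forall>e\<in>#Tr. e \<subseteq> W \<and> card e = 2" using R_W a b saW ab sanb by (auto simp: Tr_def)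
  have ncTr: "\<not> has_cycle Tr"
  proof
    assume "has_cycle Tr"
    then obtain cs where cs: "length cs \<ge> 2" "distinct cs" "mset (ce cs) \<subseteq># Tr"
      unfolding has_cycle_ce by blast
    have "set cs \<subseteq> W" using cycle_vertices[OF cs(3)] mgTr by blast
    then have vcs: "v \<notin> set cs" by blast
    have "mset (ce cs) \<subseteq># (R T + {#s ` {a,b}#}) + {#{a,b}#}" using cs(3) by (simp add: Tr_def)
    then obtain cs1 where cs1: "length cs1 \<ge> 2" "distinct cs1" "set cs1 \<subseteq> insert v (set cs)"
      "mset (ce cs1) \<subseteq># (R T + {#s ` {a,b}#}) + {#{v,a},{v,b}#}"
      using cyc_insert[OF cs(1,2) _ vcs] by blast
    have wcs1: "w \<notin> set cs1" using cs1(3) \<open>set cs \<subseteq> W\<close> sv by auto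
    have "mset (ce cs1) \<subseteq># (R T + {#{v,a},{v,b}#}) + {#{s a, s b}#}" using cs1(4) by (simp add: add_mset_commute)
    then obtain cs2 where cs2: "length cs2 \<ge> 2" "distinct cs2"
      "mset (ce cs2) \<subseteq># (R T + {#{v,a},{v,b}#}) + {#{w, s a},{w, s b}#}"
      using cyc_insert[OF cs1(1,2) _ wcs1] by blast
    have "(R T + {#{v,a},{v,b}#}) + {#{w, s a},{w, s b}#} = T"
      using Tdec sva svb by (simp add: add_mset_commute)
    then have "has_cycle T" using cs2 unfolding has_cycle_ce by metis
    then show False using ncT by blast
  qed
  have invTr: "image_mset ((`) s) Tr = Tr"
  proof -
    have "s ` (s ` {a,b}) = {a,b}" using inv aV bV by simp
    then show ?thesis using R_inv by (simp add: Tr_def add_mset_commute)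
  qed
  have nfTr: "\<forall>e\<in>#Tr. s ` e \<noteq> e"
  proof
    fix e assume "e \<in># Tr"
    then consider "e \<in># R T" | "e = {a,b}" | "e = s ` {a,b}" by (auto simp: Tr_def)
    then show "s ` e \<noteq> e"
    proof cases
      case 1 then show ?thesis using nf R_sub by (meson mset_subset_eqD)
    next
      case 2 then show ?thesis using nfab by simp
    next
      case 3 then show ?thesis using nfab img_img aV bV by (metis empty_subsetI insert_subset)
    qed
  qed
  have treeTr: "is_tree W Tr"
  proof (rule tree_reduce[OF mgTr])
    show "W \<noteq> {}" using a by blast
    show "\<not> has_cycle Tr" by (rule ncTr)
    show "R T \<subseteq># Tr" by (simp add: Tr_def)
    fix p q z assume pq: "p \<in> W" "q \<in> W" "z \<in> V - W" "{p,z} \<in># T" "{z,q} \<in># T"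
    show "(p, q) \<in> {(a, b). {a, b} \<in># Tr}\<^sup>*"
    proof (cases "z = v")
      case True
      then have "{p,v} \<in># ?F" "{v,q} \<in># ?F" using pq by auto
      then have "p \<in> {a,b}" "q \<in> {a,b}" using F a b pq(1,2) va by (auto simp: doubleton_eq_iff)
      then show ?thesis by (rule adj_pair) (simp add: Tr_def)
    next
      case False
      then have z: "z = w" using pq by blast
      then have "{p,w} \<in># filter_mset (\<lambda>e. w \<in> e) T" "{w,q} \<in># filter_mset (\<lambda>e. w \<in> e) T" using pq by auto
      then have "p \<in> {s a, s b}" "q \<in> {s a, s b}" unfolding Fw sva svb using pq(1,2)
        by (auto simp: doubleton_eq_iff)
      then show ?thesis by (rule adj_pair) (simp add: Tr_def)
    qed
  qed
  show ?thesis
    apply (rule exI[of _ a], rule exI[of _ b])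
    using a b Tdec treeTr invTr nfTr unfolding Tr_def by simp
qed

end


lemma deg_pos:
  assumes "is_tree V T" "x \<in> V" "2 \<le> card V"
  shows "1 \<le> deg T x"
proof -
  have fin: "finite V" and conn: "connected_mg V T" using assms(1) by (auto simp: is_tree_def multigraph_def)
  have "card (V - {x}) \<ge> 1" using assms(2,3) fin by simp
  then have "V - {x} \<noteq> {}" by (metis card.empty not_one_le_zero)
  then obtain y where y: "y \<in> V" "y \<noteq> x" by blast
  obtain z where "{x,z} \<in># T" using edge_exists[OF conn assms(2) y(1)] y(2) by metis
  then have "{x,z} \<in># filter_mset (\<lambda>e. x \<in> e) T" by simp
  then have "filter_mset (\<lambda>e. x \<in> e) T \<noteq> {#}" by (metis empty_iff set_mset_empty)
  then have "size (filter_mset (\<lambda>e. x \<in> e) T) \<noteq> 0" by simp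
  then show ?thesis unfolding deg_def by linarith
qed

lemma deg_fixed:
  assumes "is_tree V T" "x \<in> V" "2 \<le> card V" "image_mset ((`) s) T = T" "\<forall>e\<in>#T. s ` e \<noteq> e" "s x = x"
  shows "2 \<le> deg T x"
proof -
  have fin: "finite V" and conn: "connected_mg V T" using assms(1) by (auto simp: is_tree_def multigraph_def)
  have "card (V - {x}) \<ge> 1" using assms(2,3) fin by simp
  then have "V - {x} \<noteq> {}" by (metis card.empty not_one_le_zero)
  then obtain y where y: "y \<in> V" "y \<noteq> x" by blast
  obtain z where z: "{x,z} \<in># T" using edge_exists[OF conn assms(2) y(1)] y(2) by metis
  have "s ` {x,z} \<in># image_mset ((`) s) T" using z by (rule imageI[where f="image s", THEN subst[OF set_image_mset[symmetric], of "\<lambda>A. _ \<in> A"]])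
  then have sz: "s ` {x,z} \<in># T" using assms(4) by simp
  have ne: "s ` {x,z} \<noteq> {x,z}" using assms(5) z by blast
  have "{x,z} \<in># filter_mset (\<lambda>e. x \<in> e) T" "s ` {x,z} \<in># filter_mset (\<lambda>e. x \<in> e) T"
    using z sz assms(6) by auto
  then show ?thesis unfolding deg_def using ne two_in_mset_size by metis
qed

lemma G2_reduced:
  assumes "is_tree W A" "is_tree W B" "image_mset ((`) s) A = A" "image_mset ((`) s) B = B"
    "\<forall>e\<in>#A. s ` e \<noteq> e" "\<forall>e\<in>#B. s ` e \<noteq> e" "bij_betw s W W" "\<forall>x\<in>W. s (s x) = x"
  shows "in_G2sym (W, A + B, A, B, s)"
proof (cases "\<exists>x\<in>W. s x \<noteq> x")
  case True
  have mA: "multigraph W A" and mB: "multigraph W B" using assms(1,2) by (auto simp: is_tree_def)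
  have mg: "multigraph W (A + B)" using mA mB by (auto simp: multigraph_def)
  have "two_tree_decomp W (A + B) A B" using mg assms(1,2) by (simp add: two_tree_decomp_def spanning_tree_def)
  moreover have "z2_symmetric W (A + B) s" using mg assms(3,4,7,8) True
    by (simp add: z2_symmetric_def automorphism_def)
  moreover have "no_fixed_edges (A + B) s" using assms(5,6) by (auto simp: no_fixed_edges_def)
  ultimately show ?thesis using assms(3,4) by simp
next
  case False
  have Ae: "A = {#}"
  proof (rule ccontr)
    assume "A \<noteq> {#}"
    then obtain e where e: "e \<in># A" by (meson multiset_nonemptyE)
    then have "e \<subseteq> W" using assms(1) by (auto simp: is_tree_def multigraph_def)
    then have "s ` e = e" using False by force
    then show False using assms(5) e by blast
  qed
  have Be: "B = {#}"
  proof (rule ccontr)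
    assume "B \<noteq> {#}"
    then obtain e where e: "e \<in># B" by (meson multiset_nonemptyE)
    then have "e \<subseteq> W" using assms(2) by (auto simp: is_tree_def multigraph_def)
    then have "s ` e = e" using False by force
    then show False using assms(6) e by blast
  qed
  have ne: "W \<noteq> {}" and conn: "connected_mg W A" using assms(1) by (auto simp: is_tree_def)
  obtain x where x: "x \<in> W" using ne by blast
  have "W = {x}"
  proof
    show "W \<subseteq> {x}"
    proof
      fix y assume "y \<in> W"
      then have "(x,y) \<in> {(a, b). {a, b} \<in># A}\<^sup>*" using conn x unfolding connected_mg_def by blast
      then have "(x,y) \<in> {}\<^sup>*" using Ae by simp
      then show "y \<in> {x}" by simp
    qed
  qed (use x in simp)
  then show ?thesis using Ae Be False by simp
qed

lemma ext0_1:
  assumes "v \<notin> W" "s v \<notin> W" "v \<noteq> s v" "V = W \<union> {v, s v}" "u \<in> W" "T = R + {#{v,u}, s ` {v,u}#}"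
  shows "sym_ext 0 1 v W R s V T s"
  unfolding sym_ext_def sym_ext0_def
  using assms by (intro disjI1 conjI exI[of _ "[u]"]) auto

lemma ext0_2:
  assumes "v \<notin> W" "s v \<notin> W" "v \<noteq> s v" "V = W \<union> {v, s v}" "u1 \<in> W" "u2 \<in> W"
    "E = R + {#{v,u1}, s ` {v,u1}#} + {#{v,u2}, s ` {v,u2}#}"
  shows "sym_ext 0 2 v W R s V E s"
  unfolding sym_ext_def sym_ext0_def
  using assms by (intro disjI1 conjI exI[of _ "[u1,u2]"]) (auto simp: add.assoc)

lemma ext1_1:
  assumes "v \<notin> W" "s v \<notin> W" "v \<noteq> s v" "V = W \<union> {v, s v}" "a \<in> W" "b \<in> W"
    "Tr = R + {#{a,b}, s ` {a,b}#}"
    "T = R + {#{v,a}, s ` {v,a}#} + {#{v,b}, s ` {v,b}#}"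
  shows "sym_ext 1 1 v W Tr s V T s"
  unfolding sym_ext_def sym_ext1_def
  using assms by (intro disjI2 conjI exI[of _ "[a,b]"]) (auto simp: add.assoc)

lemma ext1_2:
  assumes "v \<notin> W" "s v \<notin> W" "v \<noteq> s v" "V = W \<union> {v, s v}" "a \<in> W" "b \<in> W" "u \<in> W"
    "E0 = R + {#{a,b}, s ` {a,b}#}"
    "E = R + {#{v,a}, s ` {v,a}#} + {#{v,b}, s ` {v,b}#} + {#{v,u}, s ` {v,u}#}"
  shows "sym_ext 1 2 v W E0 s V E s"
  unfolding sym_ext_def sym_ext1_def
  using assms by (intro disjI2 conjI exI[of _ "[a,b,u]"]) (auto simp: add.assoc)


theorem theorem5p6:
  fixes G' :: "'v s2td"
  assumes "in_G2sym G'" and "\<not> is_K1 G'"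
  shows "\<exists>G. in_G2sym G \<and> (sym_2tree_ext 0 G G' \<or> sym_2tree_ext 1 G G')"
proof -
  obtain V E T1 T2 s where G': "G' = (V, E, T1, T2, s)" by (metis prod_cases5)
  have st: "sym_2td (V, E, T1, T2, s)" and nfE: "no_fixed_edges E s"
    using assms G' by auto
  have ttd: "two_tree_decomp V E T1 T2" and z2: "z2_symmetric V E s"
    and inv1: "image_mset ((`) s) T1 = T1" and inv2: "image_mset ((`) s) T2 = T2"
    using st by auto
  have tr1: "is_tree V T1" and tr2: "is_tree V T2" and E: "E = T1 + T2" and fin: "finite V"
    using ttd by (auto simp: two_tree_decomp_def spanning_tree_def multigraph_def)
  have bij: "bij_betw s V V" and inv: "\<forall>x\<in>V. s (s x) = x" and ntriv: "\<exists>x\<in>V. s x \<noteq> x"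
    using z2 by (auto simp: z2_symmetric_def automorphism_def)
  have nf1: "\<forall>e\<in>#T1. s ` e \<noteq> e" and nf2: "\<forall>e\<in>#T2. s ` e \<noteq> e"
    using nfE E by (auto simp: no_fixed_edges_def)
  have c2: "2 \<le> card V"
  proof -
    obtain x where x: "x \<in> V" "s x \<noteq> x" using ntriv by blast
    have "s x \<in> V" using bij x(1) by (meson bij_betwE)
    then have "{x, s x} \<subseteq> V" using x by auto
    then have "card {x, s x} \<le> card V" using fin by (rule card_mono[rotated])
    then show ?thesis using x(2) by simp
  qed
  have mg1: "\<forall>e\<in>#T1. e \<subseteq> V \<and> card e = 2" and mg2: "\<forall>e\<in>#T2. e \<subseteq> V \<and> card e = 2"
    using tr1 tr2 by (auto simp: is_tree_def multigraph_def)
  have sum: "(\<Sum>x\<in>V. deg T1 x + deg T2 x) = 2 * size T1 + 2 * size T2"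
    using handshake[OF fin mg1] handshake[OF fin mg2] by (simp add: sum.distrib)
  have sz: "size T1 + 1 \<le> card V" "size T2 + 1 \<le> card V" using tree_size tr1 tr2 by auto
  obtain v where vV: "v \<in> V" and d3: "deg T1 v + deg T2 v \<le> 3"
  proof (rule ccontr)
    assume "\<not> thesis"
    then have "\<forall>x\<in>V. 4 \<le> deg T1 x + deg T2 x" using that by force
    then have "card V * 4 \<le> (\<Sum>x\<in>V. deg T1 x + deg T2 x)" using sum_bounded_below[of V "4::nat" "\<lambda>x. deg T1 x + deg T2 x"] by simp
    then show False using sum sz c2 by linarith
  qed
  have d1: "1 \<le> deg T1 v" "1 \<le> deg T2 v" using deg_pos[OF tr1 vV c2] deg_pos[OF tr2 vV c2] by auto
  have sv: "s v \<noteq> v"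
  proof
    assume "s v = v"
    then show False using deg_fixed[OF tr1 vV c2 inv1 nf1] deg_fixed[OF tr2 vV c2 inv2 nf2] d3 by linarith
  qed
  interpret symset V s v using fin bij inv vV sv by unfold_locales auto
  interpret t1: symtree V s v T1 using tr1 inv1 nf1 by unfold_locales auto
  interpret t2: symtree V s v T2 using tr2 inv2 nf2 by unfold_locales auto
  have basic: "v \<notin> W" "s v \<notin> W" "v \<noteq> s v" "V = W \<union> {v, s v}" using vV wV sv by auto
  have R1: "image_mset ((`) s) (R T1) = R T1" "\<forall>e\<in>#R T1. s ` e \<noteq> e"
    using t1.R_inv t1.R_sub nf1 by (auto dest: mset_subset_eqD)
  have R2: "image_mset ((`) s) (R T2) = R T2" "\<forall>e\<in>#R T2. s ` e \<noteq> e"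
    using t2.R_inv t2.R_sub nf2 by (auto dest: mset_subset_eqD)
  consider "deg T1 v = 1" "deg T2 v = 1" | "deg T1 v = 2" "deg T2 v = 1" | "deg T1 v = 1" "deg T2 v = 2"
    using d1 d3 by linarith
  then show ?thesis
  proof cases
    case 1
    obtain u1 where u1: "u1 \<in> W" "T1 = R T1 + {#{v,u1}, s ` {v,u1}#}" "is_tree W (R T1)"
      using t1.piece1[OF 1(1)] by blast
    obtain u2 where u2: "u2 \<in> W" "T2 = R T2 + {#{v,u2}, s ` {v,u2}#}" "is_tree W (R T2)"
      using t2.piece1[OF 1(2)] by blast
    let ?G = "(W, R T1 + R T2, R T1, R T2, s)"
    have "in_G2sym ?G" using G2_reduced[OF u1(3) u2(3) R1(1) R2(1) R1(2) R2(2) bijW invW] .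
    moreover have "sym_2tree_ext 0 ?G G'"
    proof -
      have "sym_ext 0 2 v W (R T1 + R T2) s V E s"
        by (rule ext0_2[where v=v and s=s and W="V - {v, s v}" and V=V, OF basic u1(1) u2(1)])
          (unfold E arg_cong2[where f="(+)", OF u1(2) u2(2)], simp add: ac_simps)
      moreover have "sym_ext 0 1 v W (R T1) s V T1 s" by (rule ext0_1[where v=v and s=s and W="V - {v, s v}" and V=V, OF basic u1(1) u1(2)])
      moreover have "sym_ext 0 1 v W (R T2) s V T2 s" by (rule ext0_1[where v=v and s=s and W="V - {v, s v}" and V=V, OF basic u2(1) u2(2)])
      ultimately show ?thesis unfolding G' by auto
    qed
    ultimately show ?thesis by blast
  next
    case 2
    obtain a b where ab: "a \<in> W" "b \<in> W" "{a,b} \<in># R T1 + {#{a,b}, s ` {a,b}#}"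
      "T1 = R T1 + {#{v,a}, s ` {v,a}#} + {#{v,b}, s ` {v,b}#}"
      "is_tree W (R T1 + {#{a,b}, s ` {a,b}#})"
      "image_mset ((`) s) (R T1 + {#{a,b}, s ` {a,b}#}) = R T1 + {#{a,b}, s ` {a,b}#}"
      "\<forall>e\<in># R T1 + {#{a,b}, s ` {a,b}#}. s ` e \<noteq> e"
      using t1.piece2[OF 2(1)] by blast
    obtain u where u: "u \<in> W" "T2 = R T2 + {#{v,u}, s ` {v,u}#}" "is_tree W (R T2)"
      using t2.piece1[OF 2(2)] by blast
    let ?Tr = "R T1 + {#{a,b}, s ` {a,b}#}"
    let ?G = "(W, ?Tr + R T2, ?Tr, R T2, s)"
    have "in_G2sym ?G" using G2_reduced[OF ab(5) u(3) ab(6) R2(1) ab(7) R2(2) bijW invW] .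
    moreover have "sym_2tree_ext 1 ?G G'"
    proof -
      have "sym_ext 1 2 v W (?Tr + R T2) s V E s"
        by (rule ext1_2[where v=v and s=s and W="V - {v, s v}" and V=V, OF basic ab(1,2) u(1), of _ "R T1 + R T2"])
          (simp, unfold E arg_cong2[where f="(+)", OF ab(4) u(2)], simp add: ac_simps)
      moreover have "sym_ext 1 1 v W ?Tr s V T1 s" by (rule ext1_1[where v=v and s=s and W="V - {v, s v}" and V=V, OF basic ab(1,2) refl ab(4)])
      moreover have "sym_ext 0 1 v W (R T2) s V T2 s" by (rule ext0_1[where v=v and s=s and W="V - {v, s v}" and V=V, OF basic u(1) u(2)])
      ultimately show ?thesis unfolding G' by force
    qed
    ultimately show ?thesis by blast
  next
    case 3
    obtain a b where ab: "a \<in> W" "b \<in> W" "{a,b} \<in># R T2 + {#{a,b}, s ` {a,b}#}"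
      "T2 = R T2 + {#{v,a}, s ` {v,a}#} + {#{v,b}, s ` {v,b}#}"
      "is_tree W (R T2 + {#{a,b}, s ` {a,b}#})"
      "image_mset ((`) s) (R T2 + {#{a,b}, s ` {a,b}#}) = R T2 + {#{a,b}, s ` {a,b}#}"
      "\<forall>e\<in># R T2 + {#{a,b}, s ` {a,b}#}. s ` e \<noteq> e"
      using t2.piece2[OF 3(2)] by blast
    obtain u where u: "u \<in> W" "T1 = R T1 + {#{v,u}, s ` {v,u}#}" "is_tree W (R T1)"
      using t1.piece1[OF 3(1)] by blast
    let ?Tr = "R T2 + {#{a,b}, s ` {a,b}#}"
    let ?G = "(W, R T1 + ?Tr, R T1, ?Tr, s)"
    have "in_G2sym ?G" using G2_reduced[OF u(3) ab(5) R1(1) ab(6) R1(2) ab(7) bijW invW] .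
    moreover have "sym_2tree_ext 1 ?G G'"
    proof -
      have "sym_ext 1 2 v W (R T1 + ?Tr) s V E s"
        by (rule ext1_2[where v=v and s=s and W="V - {v, s v}" and V=V, OF basic ab(1,2) u(1), of _ "R T1 + R T2"])
          (simp add: ac_simps, unfold E arg_cong2[where f="(+)", OF u(2) ab(4)], simp add: ac_simps)
      moreover have "sym_ext 1 1 v W ?Tr s V T2 s" by (rule ext1_1[where v=v and s=s and W="V - {v, s v}" and V=V, OF basic ab(1,2) refl ab(4)])
      moreover have "sym_ext 0 1 v W (R T1) s V T1 s" by (rule ext0_1[where v=v and s=s and W="V - {v, s v}" and V=V, OF basic u(1) u(2)])
      ultimately show ?thesis unfolding G' by force
    qed
    ultimately show ?thesis by blast
  qed
qed

end
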